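(* Let $V$ be a separable right quaternionic Hilbert space with the left scalar multiplication induced by a fixed Hilbert basis, and let $T\in\mathcal{B}(V)$. If $\Phi_{T,\pi}=\{q\in\mathbb{H}:R_q(T)\in\Phi_\pi\}$ is connected, then $\sigma_{S,\pi}^{\Phi}(T)=\sigma_{S,\pi}^{\Phi^{0}}(T)$.
   Context: $\mathbb{H}$ denotes the quaternions, $Re(q)$ the real part and $|q|$ the norm of $q$. $V$ is a separable right quaternionic Hilbert space; with a fixed Hilbert basis $\{f_k\}$ define the left multiplication $qf=\sum_kf_kq\langle f_k,f\rangle$. $\mathcal{B}(V)$, the bounded right linear operators with $(qT)f=q(Tf)$, $(Tq)f=T(qf)$, composition, adjoint and operator norm, is a quaternionic two-sided Banach $C^*$-algebra with unit $\mathbb{I}$. $\mathcal{K}(V)$ is the ideal of compact operators, $\pi:\mathcal{B}(V)\to\mathcal{B}(V)/\mathcal{K}(V)$ the quotient map. $R_q(T)=T^2-2Re(q)T+|q|^2\mathbb{I}$. $\Phi_\pi=\{A:\pi(A)\text{ invertible}\}$, $\Phi_\pi^0=\mathcal{B}(V)^{-1}+\mathcal{K}(V)$ (equivalently, Fredholm operators of index $0$, where $ind(A)=\dim A^{-1}(0)-\dim(A^* )^{-1}(0)$). $\sigma_{S,\pi}^{\Phi}(T)=\{q:R_q(T)\notin\Phi_\pi\}$, $\sigma_{S,\pi}^{\Phi^0}(T)=\{q:R_q(T)\notin\Phi^0_\pi\}$. *)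

theory Defs
  imports "HOL-Analysis.Analysis"
begin

text \<open>Quaternions via the Cayley--Dickson construction: the pair (a,b) stands for
  a + b j with a, b complex (so j z = cnj z j). The product norm of complex \<times> complex
  is exactly the quaternionic modulus and the product topology is the Euclidean one
  on R^4.\<close>
type_synonym quat = "complex \<times> complex"

definition qmult :: "quat \<Rightarrow> quat \<Rightarrow> quat" where
  "qmult p q = (fst p * fst q - snd p * cnj (snd q), fst p * snd q + snd p * cnj (fst q))"

definition qRe :: "quat \<Rightarrow> real" where
  "qRe q = Re (fst q)"

text \<open>The separable right quaternionic Hilbert space, realised (via a Hilbert basis
  indexed by I \<subseteq> nat) as square-summable quaternion sequences supported on I.\<close>
definition lsq :: "nat set \<Rightarrow> (nat \<Rightarrow> quat) set" where
  "lsq I = {x. (\<forall>n. n \<notin> I \<longrightarrow> x n = 0) \<and> summable (\<lambda>n. (norm (x n))\<^sup>2)}"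

definition vnorm :: "(nat \<Rightarrow> quat) \<Rightarrow> real" where
  "vnorm x = sqrt (\<Sum>n. (norm (x n))\<^sup>2)"

type_synonym qop = "(nat \<Rightarrow> quat) \<Rightarrow> (nat \<Rightarrow> quat)"

text \<open>Bounded right linear operators on lsq I (only their values on lsq I matter).\<close>
definition qbounded_op :: "nat set \<Rightarrow> qop \<Rightarrow> bool" where
  "qbounded_op I T \<longleftrightarrow>
     (\<forall>x\<in>lsq I. T x \<in> lsq I) \<and>
     (\<forall>x\<in>lsq I. \<forall>y\<in>lsq I. \<forall>q.
        T (\<lambda>n. qmult (x n) q + y n) = (\<lambda>n. qmult (T x n) q + T y n)) \<and>
     (\<exists>C. \<forall>x\<in>lsq I. vnorm (T x) \<le> C * vnorm x)"

text \<open>Compact operators: bounded operators mapping bounded sequences to sequences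
  with a Cauchy subsequence (equivalently, the image of the unit ball is relatively
  compact, the space being complete).\<close>
definition qcompact_op :: "nat set \<Rightarrow> qop \<Rightarrow> bool" where
  "qcompact_op I K \<longleftrightarrow> qbounded_op I K \<and>
     (\<forall>x :: nat \<Rightarrow> nat \<Rightarrow> quat. (\<forall>k. x k \<in> lsq I \<and> vnorm (x k) \<le> 1) \<longrightarrow>
        (\<exists>r :: nat \<Rightarrow> nat. strict_mono r \<and>
           (\<forall>e::real>0. \<exists>N::nat. \<forall>m\<ge>N. \<forall>n\<ge>N.
              vnorm (\<lambda>i. K (x (r m)) i - K (x (r n)) i) < e)))"

definition qinvertible_op :: "nat set \<Rightarrow> qop \<Rightarrow> bool" where
  "qinvertible_op I A \<longleftrightarrow> qbounded_op I A \<and>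
     (\<exists>B. qbounded_op I B \<and> (\<forall>x\<in>lsq I. A (B x) = x \<and> B (A x) = x))"

text \<open>\<Phi>_\<pi>: \<pi>(A) invertible in the Calkin algebra B(V)/K(V), i.e. there is a bounded B
  with AB - I and BA - I compact.\<close>
definition fredholm_pi :: "nat set \<Rightarrow> qop \<Rightarrow> bool" where
  "fredholm_pi I A \<longleftrightarrow> qbounded_op I A \<and>
     (\<exists>B. qbounded_op I B \<and>
        qcompact_op I (\<lambda>x n. A (B x) n - x n) \<and>
        qcompact_op I (\<lambda>x n. B (A x) n - x n))"

definition fredholm0_pi :: "nat set \<Rightarrow> qop \<Rightarrow> bool" where
  "fredholm0_pi I A \<longleftrightarrow>
     (\<exists>S K. qinvertible_op I S \<and> qcompact_op I K \<and> (\<forall>x\<in>lsq I. A x = (\<lambda>n. S x n + K x n)))"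

definition Rq :: "quat \<Rightarrow> qop \<Rightarrow> qop" where
  "Rq q T = (\<lambda>x n. T (T x) n - (2 * qRe q) *\<^sub>R T x n + ((norm q)\<^sup>2) *\<^sub>R x n)"

definition S_ess_spec :: "nat set \<Rightarrow> qop \<Rightarrow> quat set" where
  "S_ess_spec I T = {q. \<not> fredholm_pi I (Rq q T)}"

definition S_ess_spec0 :: "nat set \<Rightarrow> qop \<Rightarrow> quat set" where
  "S_ess_spec0 I T = {q. \<not> fredholm0_pi I (Rq q T)}"

end

theory Submission
  imports Defs
begin
lemma qmult_one: "qmult a (1,0) = a"
  by (simp add: qmult_def)
lemma qmult_real: "qmult a (complex_of_real r, 0) = r *\<^sub>R a"
  by (cases a) (simp add: qmult_def scaleR_conv_of_real mult.commute)
lemma qmult_scaleR: "qmult (r *\<^sub>R a) q = r *\<^sub>R qmult a q"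
  by (simp add: qmult_def scaleR_conv_of_real algebra_simps)
lemma qmult_add: "qmult (a + b) q = qmult a q + qmult b q"
  by (simp add: qmult_def algebra_simps)
lemma qmult_zero: "qmult 0 q = 0"
  by (simp add: qmult_def zero_prod_def)
lemma qmult_norm: "norm (qmult a q) \<le> 4 * norm a * norm q"
proof -
  have f1: "norm (fst a) \<le> norm a" "norm (snd a) \<le> norm a" "norm (fst q) \<le> norm q" "norm (snd q) \<le> norm q"
    using norm_fst_le[of "fst a" "snd a"] norm_snd_le[of "snd a" "fst a"]
      norm_fst_le[of "fst q" "snd q"] norm_snd_le[of "snd q" "fst q"] by simp_all
  have "norm (qmult a q) \<le> norm (fst (qmult a q)) + norm (snd (qmult a q))"
    by (metis norm_Pair_le prod.collapse)
  also have "\<dots> \<le> (norm (fst a) * norm (fst q) + norm (snd a) * norm (snd q)) + (norm (fst a) * norm (snd q) + norm (snd a) * norm (fst q))"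
    unfolding qmult_def fst_conv snd_conv
  proof (rule add_mono)
    show "cmod (fst a * fst q - snd a * cnj (snd q)) \<le> cmod (fst a) * cmod (fst q) + cmod (snd a) * cmod (snd q)"
      using norm_triangle_ineq4[of "fst a * fst q" "snd a * cnj (snd q)"] by (simp add: norm_mult)
    show "cmod (fst a * snd q + snd a * cnj (fst q)) \<le> cmod (fst a) * cmod (snd q) + cmod (snd a) * cmod (fst q)"
      using norm_triangle_ineq[of "fst a * snd q" "snd a * cnj (fst q)"] by (simp add: norm_mult)
  qed
  also have "\<dots> \<le> 4 * norm a * norm q"
  proof -
    have "norm (fst a) * norm (fst q) \<le> norm a * norm q" "norm (snd a) * norm (snd q) \<le> norm a * norm q"
      "norm (fst a) * norm (snd q) \<le> norm a * norm q" "norm (snd a) * norm (fst q) \<le> norm a * norm q"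
      by (intro mult_mono; use f1 in simp)+
    then show ?thesis by linarith
  qed
  finally show ?thesis .
qed

lemma lsq_summable: "x \<in> lsq I \<Longrightarrow> summable (\<lambda>n. (norm (x n))\<^sup>2)"
  by (simp add: lsq_def)
lemma lsq_supp: "x \<in> lsq I \<Longrightarrow> n \<notin> I \<Longrightarrow> x n = 0"
  by (simp add: lsq_def)

lemma L2_le_vnorm:
  assumes "x \<in> lsq I" shows "L2_set (\<lambda>n. norm (x n)) {..<N} \<le> vnorm x"
proof -
  have "(\<Sum>n<N. (norm (x n))\<^sup>2) \<le> (\<Sum>n. (norm (x n))\<^sup>2)"
    by (rule sum_le_suminf) (use assms in \<open>auto simp: lsq_def\<close>)
  then show ?thesis unfolding L2_set_def vnorm_def by simp
qed

lemma vnorm_nonneg: "x \<in> lsq I \<Longrightarrow> 0 \<le> vnorm x"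
  using L2_le_vnorm[of x I 0] by simp

lemma norm_le_vnorm: "x \<in> lsq I \<Longrightarrow> norm (x n) \<le> vnorm x"
  using L2_le_vnorm[of x I "Suc n"] member_le_L2_set[of "{..<Suc n}" n "\<lambda>n. norm (x n)"]
  by simp

lemma lsq_bound:
  assumes supp: "\<And>n. n \<notin> I \<Longrightarrow> z n = 0" and B: "0 \<le> B"
    and L: "\<And>N. L2_set (\<lambda>n. norm (z n)) {..<N} \<le> B"
  shows "z \<in> lsq I \<and> vnorm z \<le> B"
proof -
  have le: "(\<Sum>n<N. (norm (z n))\<^sup>2) \<le> B\<^sup>2" for N
  proof -
    have "sqrt (\<Sum>n<N. (norm (z n))\<^sup>2) \<le> B" using L[of N] by (simp add: L2_set_def)
    then have "sqrt (\<Sum>n<N. (norm (z n))\<^sup>2) \<le> sqrt (B\<^sup>2)" using B by simp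
    then show ?thesis by (simp only: real_sqrt_le_iff)
  qed
  have sm: "summable (\<lambda>n. (norm (z n))\<^sup>2)"
    by (rule bounded_imp_summable[where B="B\<^sup>2"]) (use le[of "Suc _"] in \<open>auto simp: lessThan_Suc_atMost\<close>)
  have "(\<Sum>n. (norm (z n))\<^sup>2) \<le> B\<^sup>2" by (rule suminf_le_const[OF sm le])
  then have "vnorm z \<le> sqrt (B\<^sup>2)" unfolding vnorm_def by (rule real_sqrt_le_mono)
  with B have "vnorm z \<le> B" by simp
  with sm supp show ?thesis by (simp add: lsq_def)
qed

lemma lincomb:
  assumes u: "u \<in> lsq I" and v: "v \<in> lsq I"
  shows "(\<lambda>n. a *\<^sub>R u n + b *\<^sub>R v n) \<in> lsq I \<and>
         vnorm (\<lambda>n. a *\<^sub>R u n + b *\<^sub>R v n) \<le> \<bar>a\<bar> * vnorm u + \<bar>b\<bar> * vnorm v"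
proof (rule lsq_bound)
  show "n \<notin> I \<Longrightarrow> a *\<^sub>R u n + b *\<^sub>R v n = 0" for n using u v by (simp add: lsq_def)
  show "0 \<le> \<bar>a\<bar> * vnorm u + \<bar>b\<bar> * vnorm v" using vnorm_nonneg[OF u] vnorm_nonneg[OF v] by simp
  fix N
  have "L2_set (\<lambda>n. norm (a *\<^sub>R u n + b *\<^sub>R v n)) {..<N} \<le> L2_set (\<lambda>n. \<bar>a\<bar> * norm (u n) + \<bar>b\<bar> * norm (v n)) {..<N}"
    by (rule L2_set_mono) (auto intro: order_trans[OF norm_triangle_ineq])
  also have "\<dots> \<le> L2_set (\<lambda>n. \<bar>a\<bar> * norm (u n)) {..<N} + L2_set (\<lambda>n. \<bar>b\<bar> * norm (v n)) {..<N}"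
    by (rule L2_set_triangle_ineq)
  also have "\<dots> = \<bar>a\<bar> * L2_set (\<lambda>n. norm (u n)) {..<N} + \<bar>b\<bar> * L2_set (\<lambda>n. norm (v n)) {..<N}"
    by (simp add: L2_set_right_distrib)
  also have "\<dots> \<le> \<bar>a\<bar> * vnorm u + \<bar>b\<bar> * vnorm v"
    by (intro add_mono mult_left_mono L2_le_vnorm[OF u] L2_le_vnorm[OF v]) auto
  finally show "L2_set (\<lambda>n. norm (a *\<^sub>R u n + b *\<^sub>R v n)) {..<N} \<le> \<bar>a\<bar> * vnorm u + \<bar>b\<bar> * vnorm v" .
qed

lemma lsq_add: "u \<in> lsq I \<Longrightarrow> v \<in> lsq I \<Longrightarrow> (\<lambda>n. u n + v n) \<in> lsq I"
  using lincomb[of u I v 1 1] by simp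
lemma vnorm_add: "u \<in> lsq I \<Longrightarrow> v \<in> lsq I \<Longrightarrow> vnorm (\<lambda>n. u n + v n) \<le> vnorm u + vnorm v"
  using lincomb[of u I v 1 1] by simp
lemma lsq_diff: "u \<in> lsq I \<Longrightarrow> v \<in> lsq I \<Longrightarrow> (\<lambda>n. u n - v n) \<in> lsq I"
  using lincomb[of u I v 1 "-1"] by simp
lemma vnorm_diff: "u \<in> lsq I \<Longrightarrow> v \<in> lsq I \<Longrightarrow> vnorm (\<lambda>n. u n - v n) \<le> vnorm u + vnorm v"
  using lincomb[of u I v 1 "-1"] by simp
lemma lsq_scale: "u \<in> lsq I \<Longrightarrow> (\<lambda>n. a *\<^sub>R u n) \<in> lsq I"
  using lincomb[of u I u a 0] by simp
lemma vnorm_scale: "u \<in> lsq I \<Longrightarrow> vnorm (\<lambda>n. a *\<^sub>R u n) \<le> \<bar>a\<bar> * vnorm u"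
  using lincomb[of u I u a 0] by simp
lemma lsq_zero: "(\<lambda>n. 0) \<in> lsq I"
  by (simp add: lsq_def)
lemma vnorm_zero: "vnorm (\<lambda>n. 0) = 0"
  by (simp add: vnorm_def)
lemma vnorm_eq0: "x \<in> lsq I \<Longrightarrow> vnorm x \<le> 0 \<Longrightarrow> x = (\<lambda>n. 0)"
  using norm_le_vnorm[of x I] by (auto intro!: ext) (meson norm_le_zero_iff order_trans)

lemma lsq_cmp:
  assumes "x \<in> lsq I" "\<And>n. norm (z n) \<le> K * norm (x n)" "\<And>n. n \<notin> I \<Longrightarrow> z n = 0"
  shows "z \<in> lsq I"
proof -
  have "summable (\<lambda>n. K\<^sup>2 * (norm (x n))\<^sup>2)" using assms(1) by (simp add: lsq_def)
  moreover have "norm ((norm (z n))\<^sup>2) \<le> K\<^sup>2 * (norm (x n))\<^sup>2" for n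
  proof -
    have "norm (z n) \<le> \<bar>K\<bar> * norm (x n)" using assms(2)[of n] by (smt (verit) mult_right_mono norm_ge_zero)
    then have "(norm (z n))\<^sup>2 \<le> (\<bar>K\<bar> * norm (x n))\<^sup>2" by (simp add: power_mono)
    then show ?thesis by (simp add: power_mult_distrib)
  qed
  ultimately have "summable (\<lambda>n. (norm (z n))\<^sup>2)" by (rule summable_comparison_test'[where N=0])
  with assms(3) show ?thesis by (simp add: lsq_def)
qed

lemma lsq_qmult: "x \<in> lsq I \<Longrightarrow> y \<in> lsq I \<Longrightarrow> (\<lambda>n. qmult (x n) q + y n) \<in> lsq I"
  apply (rule lsq_add[of "\<lambda>n. qmult (x n) q", simplified])
   apply (rule lsq_cmp[where K="4 * norm q"], assumption)
  subgoal for n using qmult_norm[of "x n" q] by (metis mult.assoc mult.commute)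
  by (simp_all add: lsq_def qmult_zero)

definition opb :: "nat set \<Rightarrow> qop \<Rightarrow> real \<Rightarrow> bool" where
  "opb I E c \<longleftrightarrow> (\<forall>x\<in>lsq I. vnorm (E x) \<le> c * vnorm x)"

lemma opbD: "opb I E c \<Longrightarrow> x \<in> lsq I \<Longrightarrow> vnorm (E x) \<le> c * vnorm x"
  by (simp add: opb_def)

context fixes I :: "nat set" begin

lemma qb_lsq: "qbounded_op I T \<Longrightarrow> x \<in> lsq I \<Longrightarrow> T x \<in> lsq I"
  by (simp add: qbounded_op_def)
lemma qb_lin: "qbounded_op I T \<Longrightarrow> x \<in> lsq I \<Longrightarrow> y \<in> lsq I \<Longrightarrow>
   T (\<lambda>n. qmult (x n) q + y n) = (\<lambda>n. qmult (T x n) q + T y n)"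
  by (cases q) (simp add: qbounded_op_def)
lemma qb_bound: assumes "qbounded_op I T" shows "\<exists>C>0. opb I T C"
proof -
  obtain C where C: "\<forall>x\<in>lsq I. vnorm (T x) \<le> C * vnorm x" using assms by (auto simp: qbounded_op_def)
  have "opb I T (\<bar>C\<bar> + 1)" unfolding opb_def
  proof
    fix x assume x: "x \<in> lsq I"
    have "C * vnorm x \<le> (\<bar>C\<bar> + 1) * vnorm x" by (rule mult_right_mono) (use vnorm_nonneg[OF x] in auto)
    with C x show "vnorm (T x) \<le> (\<bar>C\<bar> + 1) * vnorm x" by auto
  qed
  then show ?thesis by (intro exI[of _ "\<bar>C\<bar> + 1"]) auto
qed
lemma qb_intro:
  assumes "\<And>x. x \<in> lsq I \<Longrightarrow> T x \<in> lsq I"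
    and "\<And>x y q. x \<in> lsq I \<Longrightarrow> y \<in> lsq I \<Longrightarrow> T (\<lambda>n. qmult (x n) q + y n) = (\<lambda>n. qmult (T x n) q + T y n)"
    and "opb I T C"
  shows "qbounded_op I T"
  using assms unfolding qbounded_op_def opb_def by blast

lemma qb_add: assumes "qbounded_op I T" "x \<in> lsq I" "y \<in> lsq I"
  shows "T (\<lambda>n. x n + y n) = (\<lambda>n. T x n + T y n)"
  using qb_lin[OF assms, of "(1,0)"] by (simp add: qmult_one)
lemma qb_zero: assumes "qbounded_op I T" shows "T (\<lambda>n. 0) = (\<lambda>n. 0)"
proof -
  have "T (\<lambda>n. 0 + 0) = (\<lambda>n. T (\<lambda>n. 0) n + T (\<lambda>n. 0) n)"
    by (rule qb_add[OF assms lsq_zero lsq_zero])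
  then show ?thesis by (auto simp: fun_eq_iff)
qed
lemma qb_scale: assumes "qbounded_op I T" "x \<in> lsq I"
  shows "T (\<lambda>n. r *\<^sub>R x n) = (\<lambda>n. r *\<^sub>R T x n)"
  using qb_lin[OF assms lsq_zero, of "(complex_of_real r, 0)"] qb_zero[OF assms(1)]
  by (simp add: qmult_real)
lemma qb_diff: assumes "qbounded_op I T" "x \<in> lsq I" "y \<in> lsq I"
  shows "T (\<lambda>n. x n - y n) = (\<lambda>n. T x n - T y n)"
proof -
  have "T (\<lambda>n. x n + (-1) *\<^sub>R y n) = (\<lambda>n. T x n + T (\<lambda>n. (-1) *\<^sub>R y n) n)"
    by (rule qb_add[OF assms(1,2) lsq_scale[OF assms(3)]])
  then show ?thesis using qb_scale[OF assms(1,3), of "-1"] by simp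
qed
lemma qb_opb: assumes "qbounded_op I T" "opb I T C" "x \<in> lsq I" "y \<in> lsq I"
  shows "vnorm (\<lambda>n. T x n - T y n) \<le> C * vnorm (\<lambda>n. x n - y n)"
  using opbD[OF assms(2) lsq_diff[OF assms(3,4)]] qb_diff[OF assms(1,3,4)] by simp

lemma qb_cong: assumes "qbounded_op I T" "\<And>x. x \<in> lsq I \<Longrightarrow> T' x = T x"
  shows "qbounded_op I T'"
proof -
  obtain C where C: "opb I T C" using qb_bound[OF assms(1)] by auto
  show ?thesis
  proof (rule qb_intro)
    show "x \<in> lsq I \<Longrightarrow> T' x \<in> lsq I" for x using assms qb_lsq by simp
    show "x \<in> lsq I \<Longrightarrow> y \<in> lsq I \<Longrightarrow> T' (\<lambda>n. qmult (x n) q + y n) = (\<lambda>n. qmult (T' x n) q + T' y n)" for x y q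
      using assms qb_lin lsq_qmult by simp
    show "opb I T' C" using C assms(2) by (simp add: opb_def)
  qed
qed

lemma qb_lc: assumes A: "qbounded_op I A" and B: "qbounded_op I B"
  shows "qbounded_op I (\<lambda>x n. a *\<^sub>R A x n + b *\<^sub>R B x n)"
proof -
  obtain CA where CA: "opb I A CA" "CA > 0" using qb_bound[OF A] by auto
  obtain CB where CB: "opb I B CB" "CB > 0" using qb_bound[OF B] by auto
  show ?thesis
  proof (rule qb_intro)
    show "x \<in> lsq I \<Longrightarrow> (\<lambda>n. a *\<^sub>R A x n + b *\<^sub>R B x n) \<in> lsq I" for x
      using lincomb[OF qb_lsq[OF A] qb_lsq[OF B]] by blast
    show "x \<in> lsq I \<Longrightarrow> y \<in> lsq I \<Longrightarrow> (\<lambda>n. a *\<^sub>R A (\<lambda>n. qmult (x n) q + y n) n + b *\<^sub>R B (\<lambda>n. qmult (x n) q + y n) n)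
       = (\<lambda>n. qmult (a *\<^sub>R A x n + b *\<^sub>R B x n) q + (a *\<^sub>R A y n + b *\<^sub>R B y n))" for x y q
      using qb_lin[OF A] qb_lin[OF B] by (simp add: qmult_add qmult_scaleR algebra_simps)
    show "opb I (\<lambda>x n. a *\<^sub>R A x n + b *\<^sub>R B x n) (\<bar>a\<bar> * CA + \<bar>b\<bar> * CB)"
      unfolding opb_def
    proof
      fix x assume x: "x \<in> lsq I"
      have "vnorm (\<lambda>n. a *\<^sub>R A x n + b *\<^sub>R B x n) \<le> \<bar>a\<bar> * vnorm (A x) + \<bar>b\<bar> * vnorm (B x)"
        using lincomb[OF qb_lsq[OF A x] qb_lsq[OF B x]] by blast
      also have "\<dots> \<le> \<bar>a\<bar> * (CA * vnorm x) + \<bar>b\<bar> * (CB * vnorm x)"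
        by (intro add_mono mult_left_mono opbD[OF CA(1) x] opbD[OF CB(1) x]) auto
      finally show "vnorm (\<lambda>n. a *\<^sub>R A x n + b *\<^sub>R B x n) \<le> (\<bar>a\<bar> * CA + \<bar>b\<bar> * CB) * vnorm x"
        by (simp add: algebra_simps)
    qed
  qed
qed

lemma qb_id: "qbounded_op I (\<lambda>x. x)"
  by (rule qb_intro[where C=1]) (auto simp: opb_def)

lemma qb_comp: assumes A: "qbounded_op I A" and B: "qbounded_op I B"
  shows "qbounded_op I (\<lambda>x. A (B x))"
proof -
  obtain CA where CA: "opb I A CA" "CA > 0" using qb_bound[OF A] by auto
  obtain CB where CB: "opb I B CB" "CB > 0" using qb_bound[OF B] by auto
  show ?thesis
  proof (rule qb_intro)
    show "x \<in> lsq I \<Longrightarrow> A (B x) \<in> lsq I" for x using A B qb_lsq by blast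
    show "x \<in> lsq I \<Longrightarrow> y \<in> lsq I \<Longrightarrow> A (B (\<lambda>n. qmult (x n) q + y n)) = (\<lambda>n. qmult (A (B x) n) q + A (B y) n)" for x y q
      using qb_lin[OF A] qb_lin[OF B] qb_lsq[OF B] by simp
    show "opb I (\<lambda>x. A (B x)) (CA * CB)" unfolding opb_def
    proof
      fix x assume x: "x \<in> lsq I"
      have "vnorm (A (B x)) \<le> CA * vnorm (B x)" by (rule opbD[OF CA(1) qb_lsq[OF B x]])
      also have "\<dots> \<le> CA * (CB * vnorm x)" using opbD[OF CB(1) x] CA(2) by (simp add: mult_left_mono)
      finally show "vnorm (A (B x)) \<le> CA * CB * vnorm x" by (simp add: mult_ac)
    qed
  qed
qed

lemma qb_plus: "qbounded_op I A \<Longrightarrow> qbounded_op I B \<Longrightarrow> qbounded_op I (\<lambda>x n. A x n + B x n)"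
  using qb_lc[of A B 1 1] by simp
lemma qb_minus: "qbounded_op I A \<Longrightarrow> qbounded_op I B \<Longrightarrow> qbounded_op I (\<lambda>x n. A x n - B x n)"
  using qb_lc[of A B 1 "-1"] by simp
lemma qb_scaleop: "qbounded_op I A \<Longrightarrow> qbounded_op I (\<lambda>x n. a *\<^sub>R A x n)"
  using qb_lc[of A A a 0] by simp
lemma qb_zeroop: "qbounded_op I (\<lambda>x n. 0)"
  using qb_scaleop[OF qb_id, of 0] by simp

end

definition cauchyv :: "(nat \<Rightarrow> nat \<Rightarrow> quat) \<Rightarrow> bool" where
  "cauchyv f \<longleftrightarrow> (\<forall>e::real>0. \<exists>N::nat. \<forall>m\<ge>N. \<forall>n\<ge>N. vnorm (\<lambda>i. f m i - f n i) < e)"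

lemma cauchyv_sub: assumes "cauchyv f" "strict_mono r" shows "cauchyv (\<lambda>m. f (r m))"
  unfolding cauchyv_def
proof (intro allI impI)
  fix e :: real assume "e > 0"
  then obtain N where N: "\<forall>m\<ge>N. \<forall>n\<ge>N. vnorm (\<lambda>i. f m i - f n i) < e" using assms(1) cauchyv_def by blast
  have "\<forall>m\<ge>N. \<forall>n\<ge>N. vnorm (\<lambda>i. f (r m) i - f (r n) i) < e"
    using N seq_suble[OF assms(2)] le_trans by blast
  then show "\<exists>N. \<forall>m\<ge>N. \<forall>n\<ge>N. vnorm (\<lambda>i. f (r m) i - f (r n) i) < e" by blast
qed

context fixes I :: "nat set" begin

lemma qc_def: "qcompact_op I K \<longleftrightarrow> qbounded_op I K \<and> (\<forall>x::nat\<Rightarrow>nat\<Rightarrow>quat. (\<forall>k. x k \<in> lsq I \<and> vnorm (x k) \<le> 1) \<longrightarrow> (\<exists>r. strict_mono r \<and> cauchyv (\<lambda>m. K (x (r m)))))"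
  unfolding qcompact_op_def cauchyv_def by simp

lemma qc_bounded: "qcompact_op I K \<Longrightarrow> qbounded_op I K"
  by (simp add: qcompact_op_def)
lemma qc_seq: "qcompact_op I K \<Longrightarrow> (\<And>k. (x::nat\<Rightarrow>nat\<Rightarrow>quat) k \<in> lsq I) \<Longrightarrow> (\<And>k. vnorm (x k) \<le> 1) \<Longrightarrow>
   \<exists>r. strict_mono r \<and> cauchyv (\<lambda>m. K (x (r m)))"
  unfolding qc_def by simp
lemma qc_seqE: assumes "qcompact_op I K" "\<And>k. (x::nat\<Rightarrow>nat\<Rightarrow>quat) k \<in> lsq I" "\<And>k. vnorm (x k) \<le> 1"
  and "\<And>r. strict_mono r \<Longrightarrow> cauchyv (\<lambda>m. K (x (r m))) \<Longrightarrow> P" shows P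
proof -
  have "\<forall>k. x k \<in> lsq I \<and> vnorm (x k) \<le> 1" using assms(2,3) by simp
  then have "\<exists>r. strict_mono r \<and> cauchyv (\<lambda>m. K (x (r m)))" using assms(1) unfolding qc_def by blast
  then show P using assms(4) by blast
qed

lemma qc_intro: "qbounded_op I K \<Longrightarrow>
  (\<And>x::nat\<Rightarrow>nat\<Rightarrow>quat. (\<And>k. x k \<in> lsq I) \<Longrightarrow> (\<And>k. vnorm (x k) \<le> 1) \<Longrightarrow> \<exists>r. strict_mono r \<and> cauchyv (\<lambda>m. K (x (r m))))
  \<Longrightarrow> qcompact_op I K"
  unfolding qc_def by simp

lemma qc_cong: assumes "qcompact_op I K" "\<And>x. x \<in> lsq I \<Longrightarrow> K' x = K x"
  shows "qcompact_op I K'"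
proof (rule qc_intro)
  show "qbounded_op I K'" by (rule qb_cong[OF qc_bounded[OF assms(1)] assms(2)])
  fix x :: "nat \<Rightarrow> nat \<Rightarrow> quat" assume x: "\<And>k. x k \<in> lsq I" "\<And>k. vnorm (x k) \<le> 1"
  obtain r where r: "strict_mono r" "cauchyv (\<lambda>m. K (x (r m)))" by (rule qc_seqE[where x=x, OF assms(1) x])
  have "(\<lambda>m. K' (x (r m))) = (\<lambda>m. K (x (r m)))" using assms(2) x by simp
  with r show "\<exists>r. strict_mono r \<and> cauchyv (\<lambda>m. K' (x (r m)))" by (intro exI[of _ r]) simp
qed

lemma qc_zero: "qcompact_op I (\<lambda>x n. 0)"
  apply (rule qc_intro[OF qb_zeroop])
  apply (rule exI[of _ "\<lambda>m. m"])
  apply (simp add: strict_mono_def cauchyv_def vnorm_zero)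
  done

lemma qc_lc: assumes K1: "qcompact_op I K1" and K2: "qcompact_op I K2"
  shows "qcompact_op I (\<lambda>x n. a *\<^sub>R K1 x n + b *\<^sub>R K2 x n)"
proof (rule qc_intro)
  show "qbounded_op I (\<lambda>x n. a *\<^sub>R K1 x n + b *\<^sub>R K2 x n)"
    by (rule qb_lc[OF qc_bounded[OF K1] qc_bounded[OF K2]])
  fix x :: "nat \<Rightarrow> nat \<Rightarrow> quat" assume x: "\<And>k. x k \<in> lsq I" "\<And>k. vnorm (x k) \<le> 1"
  obtain r1 where r1: "strict_mono r1" "cauchyv (\<lambda>m. K1 (x (r1 m)))" by (rule qc_seqE[where x=x, OF K1 x])
  obtain r2 where r2: "strict_mono r2" "cauchyv (\<lambda>m. K2 (x (r1 (r2 m))))" 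
  proof -
    have h: "\<And>k. x (r1 k) \<in> lsq I" "\<And>k. vnorm (x (r1 k)) \<le> 1" using x by auto
    show ?thesis by (rule qc_seqE[where x="\<lambda>k. x (r1 k)", OF K2 h that])
  qed
  have c1: "cauchyv (\<lambda>m. K1 (x (r1 (r2 m))))" using cauchyv_sub[OF r1(2) r2(1)] by simp
  let ?r = "\<lambda>m. r1 (r2 m)"
  have "strict_mono ?r" using r1(1) r2(1) by (simp add: strict_mono_def)
  moreover have "cauchyv (\<lambda>m i. a *\<^sub>R K1 (x (?r m)) i + b *\<^sub>R K2 (x (?r m)) i)"
    unfolding cauchyv_def
  proof (intro allI impI)
    fix e :: real assume e: "e > 0"
    define d where "d = e / (\<bar>a\<bar> + \<bar>b\<bar> + 1)"
    have d: "d > 0" using e by (simp add: d_def add_pos_nonneg)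
    obtain N1 where N1: "\<forall>m\<ge>N1. \<forall>n\<ge>N1. vnorm (\<lambda>i. K1 (x (?r m)) i - K1 (x (?r n)) i) < d"
      using c1 d unfolding cauchyv_def by blast
    obtain N2 where N2: "\<forall>m\<ge>N2. \<forall>n\<ge>N2. vnorm (\<lambda>i. K2 (x (?r m)) i - K2 (x (?r n)) i) < d"
      using r2(2) d unfolding cauchyv_def by blast
    have "vnorm (\<lambda>i. (a *\<^sub>R K1 (x (?r m)) i + b *\<^sub>R K2 (x (?r m)) i) - (a *\<^sub>R K1 (x (?r n)) i + b *\<^sub>R K2 (x (?r n)) i)) < e"
      if "m \<ge> max N1 N2" "n \<ge> max N1 N2" for m n
    proof -
      let ?u = "\<lambda>i. K1 (x (?r m)) i - K1 (x (?r n)) i" and ?v = "\<lambda>i. K2 (x (?r m)) i - K2 (x (?r n)) i"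
      have lu: "?u \<in> lsq I" by (intro lsq_diff qb_lsq[OF qc_bounded[OF K1]] x)
      have lv: "?v \<in> lsq I" by (intro lsq_diff qb_lsq[OF qc_bounded[OF K2]] x)
      have eq: "(\<lambda>i. (a *\<^sub>R K1 (x (?r m)) i + b *\<^sub>R K2 (x (?r m)) i) - (a *\<^sub>R K1 (x (?r n)) i + b *\<^sub>R K2 (x (?r n)) i))
          = (\<lambda>i. a *\<^sub>R ?u i + b *\<^sub>R ?v i)" by (simp add: algebra_simps)
      have du: "vnorm ?u < d" "vnorm ?v < d" using N1 N2 that by auto
      have "vnorm (\<lambda>i. a *\<^sub>R ?u i + b *\<^sub>R ?v i) \<le> \<bar>a\<bar> * vnorm ?u + \<bar>b\<bar> * vnorm ?v"
        using lincomb[OF lu lv] by blast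
      also have "\<bar>a\<bar> * vnorm ?u + \<bar>b\<bar> * vnorm ?v \<le> \<bar>a\<bar> * d + \<bar>b\<bar> * d"
        using du by (intro add_mono mult_left_mono) auto
      also have "\<dots> < e"
      proof -
        have pos: "\<bar>a\<bar> + \<bar>b\<bar> + 1 > 0" by simp
        have "d * (\<bar>a\<bar> + \<bar>b\<bar> + 1) = e" unfolding d_def using pos by simp
        then have "\<bar>a\<bar> * d + \<bar>b\<bar> * d = e - d" by (simp add: algebra_simps)
        then show ?thesis using d by linarith
      qed
      finally show ?thesis using eq by simp
    qed
    then show "\<exists>N. \<forall>m\<ge>N. \<forall>n\<ge>N. vnorm (\<lambda>i. (a *\<^sub>R K1 (x (?r m)) i + b *\<^sub>R K2 (x (?r m)) i) - (a *\<^sub>R K1 (x (?r n)) i + b *\<^sub>R K2 (x (?r n)) i)) < e"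
      by blast
  qed
  ultimately show "\<exists>r. strict_mono r \<and> cauchyv (\<lambda>m. (\<lambda>xa n. a *\<^sub>R K1 xa n + b *\<^sub>R K2 xa n) (x (r m)))"
    by auto
qed

lemma qc_plus: "qcompact_op I A \<Longrightarrow> qcompact_op I B \<Longrightarrow> qcompact_op I (\<lambda>x n. A x n + B x n)"
  using qc_lc[of A B 1 1] by simp
lemma qc_minus: "qcompact_op I A \<Longrightarrow> qcompact_op I B \<Longrightarrow> qcompact_op I (\<lambda>x n. A x n - B x n)"
  using qc_lc[of A B 1 "-1"] by simp

lemma qc_left: assumes B: "qbounded_op I B" and K: "qcompact_op I K"
  shows "qcompact_op I (\<lambda>x. B (K x))"
proof (rule qc_intro)
  show "qbounded_op I (\<lambda>x. B (K x))" by (rule qb_comp[OF B qc_bounded[OF K]])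
  obtain C where C: "opb I B C" "C > 0" using qb_bound[OF B] by auto
  fix x :: "nat \<Rightarrow> nat \<Rightarrow> quat" assume x: "\<And>k. x k \<in> lsq I" "\<And>k. vnorm (x k) \<le> 1"
  obtain r where r: "strict_mono r" "cauchyv (\<lambda>m. K (x (r m)))" by (rule qc_seqE[where x=x, OF K x])
  have "cauchyv (\<lambda>m. B (K (x (r m))))" unfolding cauchyv_def
  proof (intro allI impI)
    fix e :: real assume e: "e > 0"
    obtain N where N: "\<forall>m\<ge>N. \<forall>n\<ge>N. vnorm (\<lambda>i. K (x (r m)) i - K (x (r n)) i) < e / C"
      using r(2) divide_pos_pos[OF e C(2)] unfolding cauchyv_def by blast
    have "vnorm (\<lambda>i. B (K (x (r m))) i - B (K (x (r n))) i) < e" if "m \<ge> N" "n \<ge> N" for m n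
    proof -
      have "vnorm (\<lambda>i. B (K (x (r m))) i - B (K (x (r n))) i) \<le> C * vnorm (\<lambda>i. K (x (r m)) i - K (x (r n)) i)"
        by (rule qb_opb[OF B C(1)]; rule qb_lsq[OF qc_bounded[OF K]]; rule x)
      also have "\<dots> < C * (e / C)" using N that C(2) by (intro mult_strict_left_mono) auto
      finally show ?thesis using C(2) by simp
    qed
    then show "\<exists>N. \<forall>m\<ge>N. \<forall>n\<ge>N. vnorm (\<lambda>i. B (K (x (r m))) i - B (K (x (r n))) i) < e" by blast
  qed
  with r(1) show "\<exists>r. strict_mono r \<and> cauchyv (\<lambda>m. B (K (x (r m))))" by blast
qed

lemma qc_right: assumes K: "qcompact_op I K" and B: "qbounded_op I B"
  shows "qcompact_op I (\<lambda>x. K (B x))"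
proof (rule qc_intro)
  have KB: "qbounded_op I K" by (rule qc_bounded[OF K])
  show "qbounded_op I (\<lambda>x. K (B x))" by (rule qb_comp[OF KB B])
  obtain C where C: "opb I B C" "C > 0" using qb_bound[OF B] by auto
  fix x :: "nat \<Rightarrow> nat \<Rightarrow> quat" assume x: "\<And>k. x k \<in> lsq I" "\<And>k. vnorm (x k) \<le> 1"
  define y where "y k = (\<lambda>n. (1 / C) *\<^sub>R B (x k) n)" for k
  have y: "y k \<in> lsq I" for k unfolding y_def by (intro lsq_scale qb_lsq[OF B] x)
  have yb: "vnorm (y k) \<le> 1" for k
  proof -
    have "vnorm (y k) \<le> \<bar>1 / C\<bar> * vnorm (B (x k))" unfolding y_def by (rule vnorm_scale[OF qb_lsq[OF B x(1)]])
    also have "\<dots> = (1 / C) * vnorm (B (x k))" using C by simp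
    also have "\<dots> \<le> (1 / C) * (C * vnorm (x k))" using C opbD[OF C(1) x(1)[of k]] by (intro mult_left_mono) auto
    also have "\<dots> \<le> 1" using C x(2)[of k] by simp
    finally show ?thesis .
  qed
  obtain r where r: "strict_mono r" "cauchyv (\<lambda>m. K (y (r m)))" by (rule qc_seqE[where x=y, OF K y yb])
  have KBy: "K (B (x k)) = (\<lambda>n. C *\<^sub>R K (y k) n)" for k
  proof -
    have "B (x k) = (\<lambda>n. C *\<^sub>R y k n)" using C by (simp add: y_def)
    then show ?thesis using qb_scale[OF KB y] by simp
  qed
  have "cauchyv (\<lambda>m. K (B (x (r m))))" unfolding cauchyv_def
  proof (intro allI impI)
    fix e :: real assume e: "e > 0"
    obtain N where N: "\<forall>m\<ge>N. \<forall>n\<ge>N. vnorm (\<lambda>i. K (y (r m)) i - K (y (r n)) i) < e / C"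
      using r(2) divide_pos_pos[OF e C(2)] unfolding cauchyv_def by blast
    have "vnorm (\<lambda>i. K (B (x (r m))) i - K (B (x (r n))) i) < e" if "m \<ge> N" "n \<ge> N" for m n
    proof -
      have eq: "(\<lambda>i. K (B (x (r m))) i - K (B (x (r n))) i) = (\<lambda>i. C *\<^sub>R (K (y (r m)) i - K (y (r n)) i))"
        unfolding KBy by (simp add: algebra_simps)
      have "vnorm (\<lambda>i. C *\<^sub>R (K (y (r m)) i - K (y (r n)) i)) \<le> \<bar>C\<bar> * vnorm (\<lambda>i. K (y (r m)) i - K (y (r n)) i)"
        by (rule vnorm_scale[OF lsq_diff[OF qb_lsq[OF KB y] qb_lsq[OF KB y]]])
      also have "\<dots> = C * vnorm (\<lambda>i. K (y (r m)) i - K (y (r n)) i)" using C(2) by simp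
      also have "\<dots> < C * (e / C)" using N that C(2) by (intro mult_strict_left_mono) auto
      finally show ?thesis using C(2) eq by simp
    qed
    then show "\<exists>N. \<forall>m\<ge>N. \<forall>n\<ge>N. vnorm (\<lambda>i. K (B (x (r m))) i - K (B (x (r n))) i) < e" by blast
  qed
  with r(1) show "\<exists>r. strict_mono r \<and> cauchyv (\<lambda>m. K (B (x (r m))))" by blast
qed

end

lemma vnorm_neg: "vnorm (\<lambda>n. - x n) = vnorm x"
  by (simp add: vnorm_def)
lemma lsq_neg: "x \<in> lsq I \<Longrightarrow> (\<lambda>n. - x n) \<in> lsq I"
  using lsq_scale[of x I "-1"] by simp

lemma lsq_sum: fixes f :: "nat \<Rightarrow> nat \<Rightarrow> quat" assumes "\<And>k. f k \<in> lsq I" shows "(\<lambda>n. \<Sum>k<K. f k n) \<in> lsq I"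
proof (induction K)
  case 0 then show ?case by (simp add: lsq_zero)
next
  case (Suc K) then show ?case using lsq_add[OF Suc assms[of K]] by simp
qed

lemma series_lsq:
  fixes y :: "nat \<Rightarrow> nat \<Rightarrow> quat"
  assumes y: "\<And>k. y k \<in> lsq I" and s: "summable (\<lambda>k. vnorm (y k))"
  shows "(\<lambda>n. \<Sum>k. y k n) \<in> lsq I \<and> vnorm (\<lambda>n. \<Sum>k. y k n) \<le> (\<Sum>k. vnorm (y k))"
proof -
  have sn: "summable (\<lambda>k. norm (y k n))" for n
    by (rule summable_comparison_test'[OF s, where N=0]) (simp add: norm_le_vnorm[OF y])
  have sy: "summable (\<lambda>k. y k n)" for n using summable_norm_cancel[OF sn] .
  have B0: "0 \<le> (\<Sum>k. vnorm (y k))" by (rule suminf_nonneg[OF s]) (simp add: vnorm_nonneg[OF y])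
  show ?thesis
  proof (rule lsq_bound[OF _ B0])
    show "n \<notin> I \<Longrightarrow> (\<Sum>k. y k n) = 0" for n using lsq_supp[OF y] by simp
    fix N
    have part: "L2_set (\<lambda>n. norm (\<Sum>k<L. y k n)) {..<N} \<le> (\<Sum>k<L. vnorm (y k))" for L
    proof (induction L)
      case 0 then show ?case by (simp add: L2_set_def)
    next
      case (Suc L)
      have "L2_set (\<lambda>n. norm (\<Sum>k<Suc L. y k n)) {..<N} \<le> L2_set (\<lambda>n. norm (\<Sum>k<L. y k n) + norm (y L n)) {..<N}"
        by (rule L2_set_mono) (simp_all add: norm_triangle_ineq)
      also have "\<dots> \<le> L2_set (\<lambda>n. norm (\<Sum>k<L. y k n)) {..<N} + L2_set (\<lambda>n. norm (y L n)) {..<N}"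
        by (rule L2_set_triangle_ineq)
      also have "\<dots> \<le> (\<Sum>k<L. vnorm (y k)) + vnorm (y L)"
        by (rule add_mono[OF Suc.IH L2_le_vnorm[OF y]])
      finally show ?case by simp
    qed
    have le: "(\<Sum>k<L. vnorm (y k)) \<le> (\<Sum>k. vnorm (y k))" for L
      by (rule sum_le_suminf[OF s]) (auto simp: vnorm_nonneg[OF y])
    have lim: "(\<lambda>L. L2_set (\<lambda>n. norm (\<Sum>k<L. y k n)) {..<N}) \<longlonglongrightarrow> L2_set (\<lambda>n. norm (\<Sum>k. y k n)) {..<N}"
      unfolding L2_set_def by (intro tendsto_intros summable_LIMSEQ sy)
    show "L2_set (\<lambda>n. norm (\<Sum>k. y k n)) {..<N} \<le> (\<Sum>k. vnorm (y k))"
      by (rule LIMSEQ_le_const2[OF lim]) (rule exI[of _ 0], intro allI impI order_trans[OF part le])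
  qed
qed

lemma series_tail:
  fixes y :: "nat \<Rightarrow> nat \<Rightarrow> quat"
  assumes y: "\<And>k. y k \<in> lsq I" and s: "summable (\<lambda>k. vnorm (y k))"
  shows "vnorm (\<lambda>n. (\<Sum>k. y k n) - (\<Sum>k<K. y k n)) \<le> (\<Sum>j. vnorm (y (j + K)))"
proof -
  have sn: "summable (\<lambda>k. norm (y k n))" for n
    by (rule summable_comparison_test'[OF s, where N=0]) (simp add: norm_le_vnorm[OF y])
  have sy: "summable (\<lambda>k. y k n)" for n using summable_norm_cancel[OF sn] .
  have eq: "(\<lambda>n. (\<Sum>k. y k n) - (\<Sum>k<K. y k n)) = (\<lambda>n. \<Sum>j. y (j + K) n)"
    using suminf_split_initial_segment[OF sy, of _ K] by (simp add: algebra_simps)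
  have "summable (\<lambda>j. vnorm (y (j + K)))" using s summable_iff_shift[of "\<lambda>k. vnorm (y k)" K] by simp
  from series_lsq[of "\<lambda>j. y (j + K)", OF y this] show ?thesis unfolding eq by simp
qed

lemma tail_lim: assumes "summable (f :: nat \<Rightarrow> real)" shows "(\<lambda>K. \<Sum>j. f (j + K)) \<longlonglongrightarrow> 0"
proof -
  have "(\<lambda>K. suminf f - sum f {..<K}) \<longlonglongrightarrow> suminf f - suminf f"
    by (intro tendsto_intros summable_LIMSEQ assms)
  then show ?thesis by (simp add: suminf_minus_initial_segment[OF assms])
qed

lemma neumann:
  assumes A: "qbounded_op I A" and c: "0 \<le> c" "c < 1"
    and h: "\<And>x. x \<in> lsq I \<Longrightarrow> vnorm (\<lambda>n. A x n - x n) \<le> c * vnorm x"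
  shows "qinvertible_op I A"
proof -
  define E where "E = (\<lambda>x n. A x n - x n)"
  have Eb: "qbounded_op I E" unfolding E_def by (rule qb_minus[OF A qb_id])
  have Ec: "vnorm (E x) \<le> c * vnorm x" if "x \<in> lsq I" for x using h[OF that] by (simp add: E_def)
  have AE: "A x n = x n + E x n" for x n by (simp add: E_def)
  have inj: "x = x'" if xx: "x \<in> lsq I" "x' \<in> lsq I" and eq: "A x = A x'" for x x'
  proof -
    let ?z = "\<lambda>n. x n - x' n"
    have z: "?z \<in> lsq I" by (rule lsq_diff[OF xx])
    have "A ?z = (\<lambda>n. 0)" using qb_diff[OF A xx] eq by simp
    then have Ez: "E ?z = (\<lambda>n. - ?z n)" unfolding E_def by (simp add: fun_eq_iff)
    have "vnorm (E ?z) = vnorm ?z" unfolding Ez by (rule vnorm_neg)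
    then have "vnorm ?z \<le> c * vnorm ?z" using Ec[OF z] by simp
    then have "vnorm ?z \<le> 0"
    proof (rule contrapos_pp)
      assume "\<not> vnorm ?z \<le> 0"
      then have "c * vnorm ?z < 1 * vnorm ?z" using c by (intro mult_strict_right_mono) auto
      then show "\<not> vnorm ?z \<le> c * vnorm ?z" by simp
    qed
    then have "?z = (\<lambda>n. 0)" by (rule vnorm_eq0[OF z])
    then show ?thesis by (simp add: fun_eq_iff)
  qed
  have surj: "\<exists>x. x \<in> lsq I \<and> A x = y" if y: "y \<in> lsq I" for y
  proof -
    define p where "p k = ((\<lambda>v n. - E v n) ^^ k) y" for k
    have p0: "p 0 = y" by (simp add: p_def)
    have pS: "p (Suc k) = (\<lambda>n. - E (p k) n)" for k by (simp add: p_def)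
    have pl: "p k \<in> lsq I" for k
      by (induction k) (simp_all add: p0 pS y lsq_neg qb_lsq[OF Eb])
    have pn: "vnorm (p k) \<le> c ^ k * vnorm y" for k
    proof (induction k)
      case 0 then show ?case by (simp add: p0)
    next
      case (Suc k)
      have "vnorm (p (Suc k)) = vnorm (E (p k))" by (simp add: pS vnorm_neg)
      also have "\<dots> \<le> c * vnorm (p k)" by (rule Ec[OF pl])
      also have "\<dots> \<le> c * (c ^ k * vnorm y)" using Suc.IH c by (simp add: mult_left_mono)
      finally show ?case by (simp add: mult_ac)
    qed
    have ps: "summable (\<lambda>k. vnorm (p k))"
    proof (rule summable_comparison_test'[where N=0])
      show "summable (\<lambda>k. c ^ k * vnorm y)" using c by (intro summable_mult2 summable_geometric) simp
      show "norm (vnorm (p k)) \<le> c ^ k * vnorm y" for k using pn[of k] vnorm_nonneg[OF pl[of k]] by simp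
    qed
    define x where "x = (\<lambda>n. \<Sum>k. p k n)"
    define S where "S K = (\<lambda>n. \<Sum>k<K. p k n)" for K
    have xl: "x \<in> lsq I" unfolding x_def using series_lsq[OF pl ps] by blast
    have SL: "S K \<in> lsq I" for K unfolding S_def by (rule lsq_sum[OF pl])
    have ES: "E (S K) = (\<lambda>n. y n - S (Suc K) n)" for K
    proof (induction K)
      case 0 then show ?case by (simp add: S_def qb_zero[OF Eb] p0)
    next
      case (Suc K)
      have "S (Suc K) = (\<lambda>n. S K n + p K n)" by (simp add: S_def)
      then have "E (S (Suc K)) = (\<lambda>n. E (S K) n + E (p K) n)" using qb_add[OF Eb SL pl] by simp
      also have "\<dots> = (\<lambda>n. y n - S (Suc (Suc K)) n)" unfolding Suc.IH by (simp add: S_def pS fun_eq_iff)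
      finally show ?case .
    qed
    define t where "t K = (\<Sum>j. vnorm (p (j + K)))" for K
    have tl: "t \<longlonglongrightarrow> 0" unfolding t_def by (rule tail_lim[OF ps])
    have tail: "vnorm (\<lambda>n. x n - S K n) \<le> t K" for K
      unfolding x_def S_def t_def by (rule series_tail[OF pl ps])
    have "A x n = y n" for n
    proof -
      have bnd: "norm (E (S K) n - E x n) \<le> c * t K" for K
      proof -
        have d: "(\<lambda>i. x i - S K i) \<in> lsq I" by (rule lsq_diff[OF xl SL])
        have "norm (E x n - E (S K) n) \<le> vnorm (\<lambda>i. E x i - E (S K) i)"
          by (rule norm_le_vnorm[OF lsq_diff[OF qb_lsq[OF Eb xl] qb_lsq[OF Eb SL]]])
        also have "\<dots> = vnorm (E (\<lambda>i. x i - S K i))" by (simp add: qb_diff[OF Eb xl SL])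
        also have "\<dots> \<le> c * vnorm (\<lambda>i. x i - S K i)" by (rule Ec[OF d])
        also have "\<dots> \<le> c * t K" using tail[of K] c by (simp add: mult_left_mono)
        finally show ?thesis by (simp add: norm_minus_commute)
      qed
      have "(\<lambda>K. c * t K) \<longlonglongrightarrow> c * 0" by (intro tendsto_intros tl)
      then have ct: "(\<lambda>K. c * t K) \<longlonglongrightarrow> 0" by simp
      have "(\<lambda>K. E (S K) n - E x n) \<longlonglongrightarrow> 0"
        by (rule Lim_null_comparison[OF always_eventually ct]) (use bnd in blast)
      then have l1: "(\<lambda>K. E (S K) n) \<longlonglongrightarrow> E x n" by (simp add: LIM_zero_iff)
      have "(\<lambda>K. S (Suc K) n) \<longlonglongrightarrow> x n"
        unfolding S_def x_def
        by (rule LIMSEQ_Suc[OF summable_LIMSEQ[OF summable_norm_cancel[OF summable_comparison_test'[OF ps, where N=0]]]])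
          (simp add: norm_le_vnorm[OF pl])
      then have "(\<lambda>K. y n - S (Suc K) n) \<longlonglongrightarrow> y n - x n" by (intro tendsto_intros)
      then have l2: "(\<lambda>K. E (S K) n) \<longlonglongrightarrow> y n - x n" by (simp add: ES)
      have "E x n = y n - x n" using LIMSEQ_unique[OF l1 l2] .
      then show ?thesis by (simp add: AE)
    qed
    then show ?thesis using xl by (intro exI[of _ x]) (simp add: fun_eq_iff)
  qed
  define B where "B y = (SOME x. x \<in> lsq I \<and> A x = y)" for y
  have Bp: "B y \<in> lsq I \<and> A (B y) = y" if "y \<in> lsq I" for y
    unfolding B_def by (rule someI_ex[OF surj[OF that]])
  have BA: "B (A x) = x" if "x \<in> lsq I" for x
    by (rule inj[OF conjunct1[OF Bp[OF qb_lsq[OF A that]]] that conjunct2[OF Bp[OF qb_lsq[OF A that]]]])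
  have Bb: "qbounded_op I B"
  proof (rule qb_intro)
    show "x \<in> lsq I \<Longrightarrow> B x \<in> lsq I" for x using Bp by simp
    show "B (\<lambda>n. qmult (x n) q + y n) = (\<lambda>n. qmult (B x n) q + B y n)" if "x \<in> lsq I" "y \<in> lsq I" for x y q
    proof -
      have w: "(\<lambda>n. qmult (B x n) q + B y n) \<in> lsq I" using Bp that by (intro lsq_qmult) auto
      have bx: "B x \<in> lsq I" "A (B x) = x" "B y \<in> lsq I" "A (B y) = y" using Bp[OF that(1)] Bp[OF that(2)] by auto
      have "A (\<lambda>n. qmult (B x n) q + B y n) = (\<lambda>n. qmult (x n) q + y n)"
        by (simp add: qb_lin[OF A bx(1) bx(3)] bx(2) bx(4))
      also have "\<dots> = A (B (\<lambda>n. qmult (x n) q + y n))" using Bp[OF lsq_qmult[OF that]] by simp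
      finally have "(\<lambda>n. qmult (B x n) q + B y n) = B (\<lambda>n. qmult (x n) q + y n)"
        by (rule inj[OF w conjunct1[OF Bp[OF lsq_qmult[OF that]]]])
      then show ?thesis by simp
    qed
    show "opb I B (1 / (1 - c))" unfolding opb_def
    proof
      fix y assume y: "y \<in> lsq I"
      let ?b = "B y"
      have b: "?b \<in> lsq I" "A ?b = y" using Bp[OF y] by auto
      have "?b = (\<lambda>n. y n - E ?b n)" using b(2) by (auto simp: E_def fun_eq_iff)
      then have "vnorm ?b \<le> vnorm y + vnorm (E ?b)" using vnorm_diff[OF y qb_lsq[OF Eb b(1)]] by simp
      also have "\<dots> \<le> vnorm y + c * vnorm ?b" using Ec[OF b(1)] by simp
      finally have "(1 - c) * vnorm ?b \<le> vnorm y" by (simp add: algebra_simps)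
      then show "vnorm ?b \<le> 1 / (1 - c) * vnorm y" using c by (simp add: field_simps)
    qed
  qed
  have "\<forall>x\<in>lsq I. A (B x) = x \<and> B (A x) = x" using Bp BA by simp
  then show ?thesis unfolding qinvertible_op_def using A Bb by blast
qed

context fixes I :: "nat set" begin

lemma qiE: assumes "qinvertible_op I S"
  obtains S' where "qbounded_op I S" "qbounded_op I S'" "\<And>x. x \<in> lsq I \<Longrightarrow> S (S' x) = x"
    "\<And>x. x \<in> lsq I \<Longrightarrow> S' (S x) = x"
  using assms unfolding qinvertible_op_def by blast

lemma qi_intro: "qbounded_op I S \<Longrightarrow> qbounded_op I S' \<Longrightarrow> (\<And>x. x \<in> lsq I \<Longrightarrow> S (S' x) = x) \<Longrightarrow>
   (\<And>x. x \<in> lsq I \<Longrightarrow> S' (S x) = x) \<Longrightarrow> qinvertible_op I S"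
  unfolding qinvertible_op_def by blast

lemma qi_bounded: "qinvertible_op I S \<Longrightarrow> qbounded_op I S"
  by (simp add: qinvertible_op_def)

lemma qi_comp: assumes S: "qinvertible_op I S" and W: "qinvertible_op I W"
  shows "qinvertible_op I (\<lambda>x. S (W x))"
proof -
  obtain S' where S': "qbounded_op I S" "qbounded_op I S'" "\<And>x. x \<in> lsq I \<Longrightarrow> S (S' x) = x"
    "\<And>x. x \<in> lsq I \<Longrightarrow> S' (S x) = x" using qiE[OF S] by blast
  obtain W' where W': "qbounded_op I W" "qbounded_op I W'" "\<And>x. x \<in> lsq I \<Longrightarrow> W (W' x) = x"
    "\<And>x. x \<in> lsq I \<Longrightarrow> W' (W x) = x" using qiE[OF W] by blast
  show ?thesis
  proof (rule qi_intro[where S'="\<lambda>x. W' (S' x)"])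
    show "qbounded_op I (\<lambda>x. S (W x))" by (rule qb_comp[OF S'(1) W'(1)])
    show "qbounded_op I (\<lambda>x. W' (S' x))" by (rule qb_comp[OF W'(2) S'(2)])
    show "x \<in> lsq I \<Longrightarrow> S (W (W' (S' x))) = x" for x using S' W' qb_lsq by simp
    show "x \<in> lsq I \<Longrightarrow> W' (S' (S (W x))) = x" for x using S' W' qb_lsq by simp
  qed
qed

lemma qi_cong: assumes S: "qinvertible_op I S" and eq: "\<And>x. x \<in> lsq I \<Longrightarrow> T x = S x"
  shows "qinvertible_op I T"
proof -
  obtain S' where S': "qbounded_op I S" "qbounded_op I S'" "\<And>x. x \<in> lsq I \<Longrightarrow> S (S' x) = x"
    "\<And>x. x \<in> lsq I \<Longrightarrow> S' (S x) = x" using qiE[OF S] by blast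
  show ?thesis
  proof (rule qi_intro[where S'=S'])
    show "qbounded_op I T" by (rule qb_cong[OF S'(1) eq])
    show "qbounded_op I S'" by (rule S'(2))
    show "x \<in> lsq I \<Longrightarrow> T (S' x) = x" for x using S' eq qb_lsq by simp
    show "x \<in> lsq I \<Longrightarrow> S' (T x) = x" for x using S' eq by simp
  qed
qed

lemma qi_id: "qinvertible_op I (\<lambda>x. x)"
  by (rule qi_intro[OF qb_id qb_id]) auto

lemma qi_scale: assumes "r \<noteq> 0" shows "qinvertible_op I (\<lambda>x n. r *\<^sub>R x n)"
  by (rule qi_intro[OF qb_scaleop[OF qb_id] qb_scaleop[OF qb_id], where a1="1/r"]) (use assms in auto)

lemma perturb: assumes S: "qinvertible_op I S"
  shows "\<exists>d>0. \<forall>E. qbounded_op I E \<longrightarrow> opb I E d \<longrightarrow> qinvertible_op I (\<lambda>x n. S x n + E x n)"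
proof -
  obtain S' where S': "qbounded_op I S" "qbounded_op I S'" "\<And>x. x \<in> lsq I \<Longrightarrow> S (S' x) = x"
    "\<And>x. x \<in> lsq I \<Longrightarrow> S' (S x) = x" using qiE[OF S] by blast
  obtain M where M: "opb I S' M" "M > 0" using qb_bound[OF S'(2)] by auto
  have "qinvertible_op I (\<lambda>x n. S x n + E x n)" if E: "qbounded_op I E" "opb I E (1 / (2 * M))" for E
  proof -
    define F where "F = (\<lambda>x n. x n + S' (E x) n)"
    have Fb: "qbounded_op I F" unfolding F_def by (rule qb_plus[OF qb_id qb_comp[OF S'(2) E(1)]])
    have "qinvertible_op I F"
    proof (rule neumann[OF Fb, of "1/2"])
      fix x assume x: "x \<in> lsq I"
      have "vnorm (\<lambda>n. F x n - x n) = vnorm (S' (E x))" by (simp add: F_def)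
      also have "\<dots> \<le> M * vnorm (E x)" by (rule opbD[OF M(1) qb_lsq[OF E(1) x]])
      also have "\<dots> \<le> M * (1 / (2 * M) * vnorm x)" using opbD[OF E(2) x] M(2) by (intro mult_left_mono) auto
      also have "\<dots> = 1/2 * vnorm x" using M(2) by simp
      finally show "vnorm (\<lambda>n. F x n - x n) \<le> 1/2 * vnorm x" .
    qed simp_all
    then have inv: "qinvertible_op I (\<lambda>x. S (F x))" by (rule qi_comp[OF S])
    have eqF: "S (F x) = (\<lambda>n. S x n + E x n)" if x: "x \<in> lsq I" for x
      unfolding F_def using qb_add[OF S'(1) x qb_lsq[OF S'(2) qb_lsq[OF E(1) x]]] S'(3)[OF qb_lsq[OF E(1) x]] by simp
    show ?thesis by (rule qi_cong[OF inv]) (simp add: eqF)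
  qed
  moreover have "1 / (2 * M) > 0" using M by simp
  ultimately show ?thesis by blast
qed

end

context fixes I :: "nat set" begin

lemma f0E: assumes "fredholm0_pi I A"
  obtains S K where "qinvertible_op I S" "qcompact_op I K" "\<And>x. x \<in> lsq I \<Longrightarrow> A x = (\<lambda>n. S x n + K x n)"
  using assms unfolding fredholm0_pi_def by blast

lemma f0I: "qinvertible_op I S \<Longrightarrow> qcompact_op I K \<Longrightarrow> (\<And>x. x \<in> lsq I \<Longrightarrow> A x = (\<lambda>n. S x n + K x n))
   \<Longrightarrow> fredholm0_pi I A"
  unfolding fredholm0_pi_def by blast

lemma f0_bounded: assumes "fredholm0_pi I A" shows "qbounded_op I A"
proof -
  obtain S K where SK: "qinvertible_op I S" "qcompact_op I K" "\<And>x. x \<in> lsq I \<Longrightarrow> A x = (\<lambda>n. S x n + K x n)"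
    using f0E[OF assms] by blast
  show ?thesis by (rule qb_cong[OF qb_plus[OF qi_bounded[OF SK(1)] qc_bounded[OF SK(2)]] SK(3)])
qed

lemma f0_f: assumes "fredholm0_pi I A" shows "fredholm_pi I A"
proof -
  obtain S K where SK: "qinvertible_op I S" "qcompact_op I K" "\<And>x. x \<in> lsq I \<Longrightarrow> A x = (\<lambda>n. S x n + K x n)"
    using f0E[OF assms] by blast
  obtain S' where S': "qbounded_op I S" "qbounded_op I S'" "\<And>x. x \<in> lsq I \<Longrightarrow> S (S' x) = x"
    "\<And>x. x \<in> lsq I \<Longrightarrow> S' (S x) = x" using qiE[OF SK(1)] by blast
  have K: "qbounded_op I K" by (rule qc_bounded[OF SK(2)])
  have c1: "qcompact_op I (\<lambda>x n. A (S' x) n - x n)"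
  proof (rule qc_cong[OF qc_right[OF SK(2) S'(2)]])
    fix x assume x: "x \<in> lsq I"
    show "(\<lambda>n. A (S' x) n - x n) = K (S' x)" using SK(3)[OF qb_lsq[OF S'(2) x]] S'(3)[OF x] by simp
  qed
  have c2: "qcompact_op I (\<lambda>x n. S' (A x) n - x n)"
  proof (rule qc_cong[OF qc_left[OF S'(2) SK(2)]])
    fix x assume x: "x \<in> lsq I"
    show "(\<lambda>n. S' (A x) n - x n) = S' (K x)"
      using SK(3)[OF x] qb_add[OF S'(2) qb_lsq[OF S'(1) x] qb_lsq[OF K x]] S'(4)[OF x] by simp
  qed
  show ?thesis unfolding fredholm_pi_def using f0_bounded[OF assms] S'(2) c1 c2 by blast
qed

lemma L1: assumes A': "fredholm0_pi I A'" and B: "qbounded_op I B" and X: "fredholm0_pi I (\<lambda>x. A' (B x))"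
  shows "fredholm0_pi I B"
proof -
  obtain S K where SK: "qinvertible_op I S" "qcompact_op I K" "\<And>x. x \<in> lsq I \<Longrightarrow> A' x = (\<lambda>n. S x n + K x n)"
    using f0E[OF A'] by blast
  obtain S' where S': "qbounded_op I S" "qbounded_op I S'" "\<And>x. x \<in> lsq I \<Longrightarrow> S (S' x) = x"
    "\<And>x. x \<in> lsq I \<Longrightarrow> S' (S x) = x" using qiE[OF SK(1)] by blast
  obtain S2 K2 where SK2: "qinvertible_op I S2" "qcompact_op I K2" "\<And>x. x \<in> lsq I \<Longrightarrow> A' (B x) = (\<lambda>n. S2 x n + K2 x n)"
    using f0E[OF X] by blast
  have K: "qbounded_op I K" by (rule qc_bounded[OF SK(2)])
  have K2: "qbounded_op I K2" by (rule qc_bounded[OF SK2(2)])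
  have S2: "qbounded_op I S2" by (rule qi_bounded[OF SK2(1)])
  have S'inv: "qinvertible_op I S'" by (rule qi_intro[OF S'(2) S'(1) S'(4) S'(3)])
  show ?thesis
  proof (rule f0I[OF qi_comp[OF S'inv SK2(1)] qc_minus[OF qc_left[OF S'(2) SK2(2)] qc_left[OF S'(2) qc_right[OF SK(2) B]]]])
    fix x assume x: "x \<in> lsq I"
    have bx: "B x \<in> lsq I" by (rule qb_lsq[OF B x])
    have e1: "S' (A' (B x)) = (\<lambda>n. B x n + S' (K (B x)) n)"
      using SK(3)[OF bx] qb_add[OF S'(2) qb_lsq[OF S'(1) bx] qb_lsq[OF K bx]] S'(4)[OF bx] by simp
    have e2: "S' (A' (B x)) = (\<lambda>n. S' (S2 x) n + S' (K2 x) n)"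
      using SK2(3)[OF x] qb_add[OF S'(2) qb_lsq[OF S2 x] qb_lsq[OF K2 x]] by simp
    have "\<forall>n. B x n + S' (K (B x)) n = S' (S2 x) n + S' (K2 x) n"
      using e1 e2 by (metis)
    then have "\<forall>n. B x n = S' (S2 x) n + S' (K2 x) n - S' (K (B x)) n" by (simp add: eq_diff_eq)
    then show "B x = (\<lambda>n. S' (S2 x) n + (S' (K2 x) n - S' (K (B x)) n))"
      by (simp add: fun_eq_iff add_diff_eq)
  qed
qed

lemma L2: assumes B: "fredholm0_pi I B" and A: "qbounded_op I A" and K1: "qcompact_op I (\<lambda>x n. A (B x) n - x n)"
  shows "fredholm0_pi I A"
proof -
  obtain S3 K3 where SK: "qinvertible_op I S3" "qcompact_op I K3" "\<And>x. x \<in> lsq I \<Longrightarrow> B x = (\<lambda>n. S3 x n + K3 x n)"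
    using f0E[OF B] by blast
  obtain S' where S': "qbounded_op I S3" "qbounded_op I S'" "\<And>x. x \<in> lsq I \<Longrightarrow> S3 (S' x) = x"
    "\<And>x. x \<in> lsq I \<Longrightarrow> S' (S3 x) = x" using qiE[OF SK(1)] by blast
  have K3: "qbounded_op I K3" by (rule qc_bounded[OF SK(2)])
  have S'inv: "qinvertible_op I S'" by (rule qi_intro[OF S'(2) S'(1) S'(4) S'(3)])
  show ?thesis
  proof (rule f0I[OF S'inv qc_minus[OF qc_right[OF K1 S'(2)] qc_left[OF A qc_right[OF SK(2) S'(2)]]]])
    fix z assume z: "z \<in> lsq I"
    define x where "x = S' z"
    have x: "x \<in> lsq I" unfolding x_def by (rule qb_lsq[OF S'(2) z])
    have "B x = (\<lambda>n. z n + K3 x n)" using SK(3)[OF x] S'(3)[OF z] by (simp add: x_def)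
    then have "A (B x) = (\<lambda>n. A z n + A (K3 x) n)" using qb_add[OF A z qb_lsq[OF K3 x]] by simp
    then show "A z = (\<lambda>n. S' z n + (A (B (S' z)) n - S' z n - A (K3 (S' z)) n))"
      by (simp add: x_def fun_eq_iff)
  qed
qed

end

context fixes I :: "nat set" begin

lemma opb_mono: "opb I E c \<Longrightarrow> c \<le> c' \<Longrightarrow> (\<And>x. x \<in> lsq I \<Longrightarrow> 0 \<le> vnorm x) \<Longrightarrow> opb I E c'"
  unfolding opb_def by (meson mult_right_mono order_trans)

lemma f0_open: assumes A: "fredholm0_pi I A"
  shows "\<exists>d>0. \<forall>A'. qbounded_op I A' \<longrightarrow> opb I (\<lambda>x n. A' x n - A x n) d \<longrightarrow> fredholm0_pi I A'"
proof -
  obtain S K where SK: "qinvertible_op I S" "qcompact_op I K" "\<And>x. x \<in> lsq I \<Longrightarrow> A x = (\<lambda>n. S x n + K x n)"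
    using f0E[OF A] by blast
  obtain d where d: "d > 0" "\<And>E. qbounded_op I E \<Longrightarrow> opb I E d \<Longrightarrow> qinvertible_op I (\<lambda>x n. S x n + E x n)"
    using perturb[OF SK(1)] by blast
  have "fredholm0_pi I A'" if A': "qbounded_op I A'" "opb I (\<lambda>x n. A' x n - A x n) d" for A'
  proof (rule f0I[OF d(2)[OF qb_minus[OF A'(1) f0_bounded[OF A]] A'(2)] SK(2)])
    fix x assume x: "x \<in> lsq I"
    show "A' x = (\<lambda>n. S x n + (A' x n - A x n) + K x n)" using SK(3)[OF x] by (simp add: fun_eq_iff)
  qed
  with d(1) show ?thesis by blast
qed

lemma f_closed: assumes A: "fredholm_pi I A"
  shows "\<exists>d>0. \<forall>A'. fredholm0_pi I A' \<longrightarrow> opb I (\<lambda>x n. A' x n - A x n) d \<longrightarrow> fredholm0_pi I A"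
proof -
  obtain B where B: "qbounded_op I A" "qbounded_op I B" "qcompact_op I (\<lambda>x n. A (B x) n - x n)"
    using A unfolding fredholm_pi_def by blast
  obtain CB where CB: "opb I B CB" "CB > 0" using qb_bound[OF B(2)] by auto
  obtain d0 where d0: "d0 > 0" "\<And>E. qbounded_op I E \<Longrightarrow> opb I E d0 \<Longrightarrow> qinvertible_op I (\<lambda>x n. x n + E x n)"
    using perturb[OF qi_id] by blast
  have "fredholm0_pi I A" if A': "fredholm0_pi I A'" "opb I (\<lambda>x n. A' x n - A x n) (d0 / CB)" for A'
  proof -
    define E where "E = (\<lambda>x n. A' (B x) n - A (B x) n)"
    have Eb: "qbounded_op I E" unfolding E_def
      by (rule qb_comp[OF qb_minus[OF f0_bounded[OF A'(1)] B(1)] B(2)])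
    have "opb I E d0" unfolding opb_def
    proof
      fix x assume x: "x \<in> lsq I"
      have "vnorm (E x) \<le> d0 / CB * vnorm (B x)" unfolding E_def by (rule opbD[OF A'(2) qb_lsq[OF B(2) x]])
      also have "\<dots> \<le> d0 / CB * (CB * vnorm x)" using opbD[OF CB(1) x] CB(2) d0(1) by (intro mult_left_mono) auto
      also have "\<dots> = d0 * vnorm x" using CB(2) by simp
      finally show "vnorm (E x) \<le> d0 * vnorm x" .
    qed
    then have W: "qinvertible_op I (\<lambda>x n. x n + E x n)" by (rule d0(2)[OF Eb])
    have X: "fredholm0_pi I (\<lambda>x. A' (B x))"
    proof (rule f0I[OF W B(3)])
      fix x assume "x \<in> lsq I"
      show "A' (B x) = (\<lambda>n. x n + E x n + (A (B x) n - x n))" by (simp add: E_def fun_eq_iff)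
    qed
    have "fredholm0_pi I B" by (rule L1[OF A'(1) B(2) X])
    then show ?thesis by (rule L2[OF _ B(1) B(3)])
  qed
  moreover have "d0 / CB > 0" using d0 CB by simp
  ultimately show ?thesis by blast
qed

lemma Rq_bounded: assumes T: "qbounded_op I T" shows "qbounded_op I (Rq q T)"
  unfolding Rq_def by (rule qb_plus[OF qb_minus[OF qb_comp[OF T T] qb_scaleop[OF T]] qb_scaleop[OF qb_id]])

lemma Rq_diff: assumes T: "qbounded_op I T" and C: "opb I T C" "C > 0"
  shows "opb I (\<lambda>x n. Rq p T x n - Rq q T x n) (2 * \<bar>qRe p - qRe q\<bar> * C + \<bar>(norm p)\<^sup>2 - (norm q)\<^sup>2\<bar>)"
  unfolding opb_def
proof
  fix x assume x: "x \<in> lsq I"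
  have eq: "(\<lambda>n. Rq p T x n - Rq q T x n) = (\<lambda>n. (2 * qRe q - 2 * qRe p) *\<^sub>R T x n + ((norm p)\<^sup>2 - (norm q)\<^sup>2) *\<^sub>R x n)"
    by (simp add: Rq_def fun_eq_iff algebra_simps)
  have "vnorm (\<lambda>n. Rq p T x n - Rq q T x n) \<le> \<bar>2 * qRe q - 2 * qRe p\<bar> * vnorm (T x) + \<bar>(norm p)\<^sup>2 - (norm q)\<^sup>2\<bar> * vnorm x"
    unfolding eq by (rule conjunct2[OF lincomb[OF qb_lsq[OF T x] x]])
  also have "\<dots> \<le> \<bar>2 * qRe q - 2 * qRe p\<bar> * (C * vnorm x) + \<bar>(norm p)\<^sup>2 - (norm q)\<^sup>2\<bar> * vnorm x"
    using opbD[OF C(1) x] by (intro add_mono mult_left_mono) auto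
  also have "\<dots> = (2 * \<bar>qRe p - qRe q\<bar> * C + \<bar>(norm p)\<^sup>2 - (norm q)\<^sup>2\<bar>) * vnorm x"
  proof -
    have "\<bar>2 * qRe q - 2 * qRe p\<bar> = \<bar>2 * (qRe q - qRe p)\<bar>" by (simp only: right_diff_distrib)
    also have "\<dots> = 2 * \<bar>qRe q - qRe p\<bar>" by (simp only: abs_mult)
    also have "\<dots> = 2 * \<bar>qRe p - qRe q\<bar>" by (simp only: abs_minus_commute)
    finally have ab: "\<bar>2 * qRe q - 2 * qRe p\<bar> = 2 * \<bar>qRe p - qRe q\<bar>" .
    show ?thesis unfolding ab by (simp add: algebra_simps)
  qed
  finally show "vnorm (\<lambda>n. Rq p T x n - Rq q T x n) \<le> (2 * \<bar>qRe p - qRe q\<bar> * C + \<bar>(norm p)\<^sup>2 - (norm q)\<^sup>2\<bar>) * vnorm x" .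
qed

end

lemma cont_g: fixes q :: quat and C :: real assumes "e > 0" "C \<ge> 0"
  shows "\<exists>d>0. \<forall>p. dist p q < d \<longrightarrow> 2 * \<bar>qRe p - qRe q\<bar> * C + \<bar>(norm p)\<^sup>2 - (norm q)\<^sup>2\<bar> < e"
proof -
  let ?g = "\<lambda>p::quat. 2 * \<bar>Re (fst p) - Re (fst q)\<bar> * C + \<bar>(norm p)\<^sup>2 - (norm q)\<^sup>2\<bar>"
  have "continuous (at q) ?g" by (intro continuous_intros continuous_Re)
  then obtain d where d: "d > 0" "\<forall>p. dist p q < d \<longrightarrow> dist (?g p) (?g q) < e"
    using assms unfolding continuous_at_eps_delta by blast
  have g0: "?g q = 0" by simp
  have nn: "?g p \<ge> 0" for p using assms(2) by simp
  show ?thesis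
  proof (intro exI[of _ d] conjI allI impI)
    show "d > 0" by (rule d(1))
    fix p assume "dist p q < d"
    then have "dist (?g p) (?g q) < e" using d(2) by blast
    then have "?g p < e" using nn[of p] g0 by (simp add: dist_real_def)
    then show "2 * \<bar>qRe p - qRe q\<bar> * C + \<bar>(norm p)\<^sup>2 - (norm q)\<^sup>2\<bar> < e" by (simp add: qRe_def)
  qed
qed

lemma large_q: assumes T: "qbounded_op I T" shows "\<exists>q. fredholm0_pi I (Rq q T)"
proof -
  obtain C where C: "opb I T C" "C > 0" using qb_bound[OF T] by auto
  define r where "r = 3 * C + 1"
  have r: "r > 0" using C by (simp add: r_def)
  define q0 :: quat where "q0 = (complex_of_real r, 0)"
  have qRe0: "qRe q0 = r" by (simp add: q0_def qRe_def)
  have nq0: "norm q0 = r" using r by (simp add: q0_def norm_Pair)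
  define a where "a = 1 / r\<^sup>2"
  define b where "b = a * (2 * r)"
  have ab: "a > 0" "b > 0" using r by (simp_all add: a_def b_def)
  define A where "A = (\<lambda>x n. a *\<^sub>R Rq q0 T x n)"
  have Ab: "qbounded_op I A" unfolding A_def by (rule qb_scaleop[OF Rq_bounded[OF T]])
  define c where "c = a * C\<^sup>2 + b * C"
  have c0: "0 \<le> c" using ab C by (simp add: c_def)
  have c1: "c < 1"
  proof -
    have "r\<^sup>2 - (C\<^sup>2 + 2 * r * C) = 2 * (C * C) + 4 * C + 1" by (simp add: r_def power2_eq_square algebra_simps)
    moreover have "C * C > 0" using C by simp
    ultimately have "C\<^sup>2 + 2 * r * C < r\<^sup>2" using C by linarith
    then have "(C\<^sup>2 + 2 * r * C) / r\<^sup>2 < 1" using r by simp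
    moreover have "c = (C\<^sup>2 + 2 * r * C) / r\<^sup>2" using r by (simp add: c_def a_def b_def field_simps power2_eq_square)
    ultimately show ?thesis by simp
  qed
  have "qinvertible_op I A"
  proof (rule neumann[OF Ab c0 c1])
    fix x assume x: "x \<in> lsq I"
    have eq: "(\<lambda>n. A x n - x n) = (\<lambda>n. a *\<^sub>R T (T x) n + (- b) *\<^sub>R T x n)"
      using r by (simp add: A_def Rq_def qRe0 nq0 fun_eq_iff a_def b_def algebra_simps)
    have "vnorm (\<lambda>n. A x n - x n) \<le> \<bar>a\<bar> * vnorm (T (T x)) + \<bar>- b\<bar> * vnorm (T x)"
      unfolding eq by (rule conjunct2[OF lincomb[OF qb_lsq[OF T qb_lsq[OF T x]] qb_lsq[OF T x]]])
    also have "\<dots> = a * vnorm (T (T x)) + b * vnorm (T x)" using ab by simp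
    also have "\<dots> \<le> a * (C * (C * vnorm x)) + b * (C * vnorm x)"
    proof (intro add_mono mult_left_mono)
      have "vnorm (T (T x)) \<le> C * vnorm (T x)" by (rule opbD[OF C(1) qb_lsq[OF T x]])
      also have "\<dots> \<le> C * (C * vnorm x)" using opbD[OF C(1) x] C(2) by (intro mult_left_mono) auto
      finally show "vnorm (T (T x)) \<le> C * (C * vnorm x)" .
      show "vnorm (T x) \<le> C * vnorm x" by (rule opbD[OF C(1) x])
    qed (use ab in auto)
    also have "\<dots> = c * vnorm x" by (simp add: c_def power2_eq_square algebra_simps)
    finally show "vnorm (\<lambda>n. A x n - x n) \<le> c * vnorm x" .
  qed
  then have Ainv: "qinvertible_op I A" .
  have sc: "qinvertible_op I (\<lambda>x n. r\<^sup>2 *\<^sub>R x n)" by (rule qi_scale) (use r in simp)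
  have inv: "qinvertible_op I (\<lambda>x. (\<lambda>x n. r\<^sup>2 *\<^sub>R x n) (A x))" by (rule qi_comp[OF sc Ainv])
  have "qinvertible_op I (Rq q0 T)"
  proof (rule qi_cong[OF inv])
    fix x assume "x \<in> lsq I"
    show "Rq q0 T x = (\<lambda>x n. r\<^sup>2 *\<^sub>R x n) (A x)" using r by (simp add: A_def a_def fun_eq_iff)
  qed
  then have "fredholm0_pi I (Rq q0 T)" by (rule f0I[OF _ qc_zero]) simp
  then show ?thesis by blast
qed

theorem mainTheorem11:
  fixes I :: "nat set" and T :: qop
  assumes "qbounded_op I T"
    and "connected {q :: quat. fredholm_pi I (Rq q T)}"
  shows "S_ess_spec I T = S_ess_spec0 I T"
proof -
  note T = assms(1)
  obtain C where C: "opb I T C" "C > 0" using qb_bound[OF T] by auto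
  define U where "U = {q :: quat. fredholm_pi I (Rq q T)}"
  define P where "P = {q :: quat. fredholm0_pi I (Rq q T)}"
  have PU: "P \<subseteq> U" unfolding P_def U_def using f0_f by blast
  have nn: "\<And>x. x \<in> lsq I \<Longrightarrow> 0 \<le> vnorm x" by (rule vnorm_nonneg)
  have op: "openin (top_of_set U) P" unfolding openin_euclidean_subtopology_iff
  proof (intro conjI ballI PU)
    fix q assume q: "q \<in> P"
    obtain d where d: "d > 0" "\<forall>A'. qbounded_op I A' \<longrightarrow> opb I (\<lambda>x n. A' x n - Rq q T x n) d \<longrightarrow> fredholm0_pi I A'"
      using f0_open[of I "Rq q T"] q unfolding P_def by blast
    obtain e where e: "e > 0" "\<forall>p. dist p q < e \<longrightarrow> 2 * \<bar>qRe p - qRe q\<bar> * C + \<bar>(norm p)\<^sup>2 - (norm q)\<^sup>2\<bar> < d"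
      using cont_g[OF d(1), of C q] C(2) by auto
    have "p \<in> P" if "dist p q < e" for p
    proof -
      have gp: "2 * \<bar>qRe p - qRe q\<bar> * C + \<bar>(norm p)\<^sup>2 - (norm q)\<^sup>2\<bar> < d" using e(2) that by blast
      have "opb I (\<lambda>x n. Rq p T x n - Rq q T x n) d"
        by (rule opb_mono[OF Rq_diff[OF T C] less_imp_le[OF gp] nn])
      then show ?thesis using d(2) Rq_bounded[OF T] unfolding P_def by blast
    qed
    then show "\<exists>e>0. \<forall>x'\<in>U. dist x' q < e \<longrightarrow> x' \<in> P" using e(1) by blast
  qed
  have cl: "closedin (top_of_set U) P" unfolding closedin_limpt
  proof (intro conjI allI impI PU)
    fix q assume q: "q islimpt P \<and> q \<in> U"
    obtain d where d: "d > 0" "\<forall>A'. fredholm0_pi I A' \<longrightarrow> opb I (\<lambda>x n. A' x n - Rq q T x n) d \<longrightarrow> fredholm0_pi I (Rq q T)"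
      using f_closed[of I "Rq q T"] q unfolding U_def by blast
    obtain e where e: "e > 0" "\<forall>p. dist p q < e \<longrightarrow> 2 * \<bar>qRe p - qRe q\<bar> * C + \<bar>(norm p)\<^sup>2 - (norm q)\<^sup>2\<bar> < d"
      using cont_g[OF d(1), of C q] C(2) by auto
    obtain p where p: "p \<in> P" "dist p q < e" using q e(1) unfolding islimpt_approachable by blast
    have gp: "2 * \<bar>qRe p - qRe q\<bar> * C + \<bar>(norm p)\<^sup>2 - (norm q)\<^sup>2\<bar> < d" using e(2) p(2) by blast
    have "opb I (\<lambda>x n. Rq p T x n - Rq q T x n) d"
      by (rule opb_mono[OF Rq_diff[OF T C] less_imp_le[OF gp] nn])
    then show "q \<in> P" using d(2) p(1) unfolding P_def by blast
  qed
  have "P = {} \<or> P = U" using assms(2) op cl unfolding connected_clopen U_def by blast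
  moreover have "P \<noteq> {}" using large_q[OF T] unfolding P_def by blast
  ultimately have "P = U" by blast
  then have "fredholm_pi I (Rq q T) \<longleftrightarrow> fredholm0_pi I (Rq q T)" for q
    unfolding P_def U_def by blast
  then show ?thesis unfolding S_ess_spec_def S_ess_spec0_def by blast
qed

end
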